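(* Fix $c_0,c_1\ge 0$. Suppose that $\varepsilon=(\varepsilon_0,\varepsilon_1)=(0,0)$ with probability one. Then the estimator is incentive compatible: for every $(\beta_0,\beta_1)\in\mathbb{R}^2$ and all $x,r\in\{0,1\}$, $$\mathbb{E}_\varepsilon\big[\hat f(x)-f(x)\big]^2\le \mathbb{E}_\varepsilon\big[\hat f(r)-f(x)\big]^2 .$$
   Context: Setting: an agent has a binary characteristic $x\in\{0,1\}$ and ideal action $f(x)=\beta_0+\beta_1x$, with unknown parameters $\beta=(\beta_0,\beta_1)$. A statistician observes $y_x=f(x)+\varepsilon_x$ for $x=0,1$, where $\varepsilon_0,\varepsilon_1$ are i.i.d. with mean zero, and computes $(b_0,b_1)=(b_0(\varepsilon,\beta),b_1(\varepsilon,\beta))$ solving $\min_{b_0,b_1}\sum_{x=0,1}(y_x-b_0-b_1x)^2+c_0\mathbf{1}_{b_1\neq0}+c_1|b_1|$, breaking indifference between including ($b_1\ne 0$) and excluding ($b_1=0$) in favor of inclusion. Given the agent's report $r\in\{0,1\}$ the statistician takes the action $\hat f(r)=b_0+b_1r$; the agent's payoff is $-(\hat f(r)-f(x))^2$. The estimator is called incentive compatible if the displayed inequality holds for every $\beta$ and all $x,r\in\{0,1\}$. *)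

theory Defs
  imports "HOL-Probability.Probability"
begin

definition pen_obj :: "real \<Rightarrow> real \<Rightarrow> real \<Rightarrow> real \<Rightarrow> real \<Rightarrow> real \<Rightarrow> real" where
  "pen_obj c0 c1 y0 y1 b0 b1 =
     (y0 - b0)^2 + (y1 - b0 - b1 * 1)^2 + c0 * (if b1 \<noteq> 0 then 1 else 0) + c1 * \<bar>b1\<bar>"

definition is_minimizer :: "real \<Rightarrow> real \<Rightarrow> real \<Rightarrow> real \<Rightarrow> real \<Rightarrow> real \<Rightarrow> bool" where
  "is_minimizer c0 c1 y0 y1 b0 b1 \<longleftrightarrow>
     (\<forall>b0' b1'. pen_obj c0 c1 y0 y1 b0 b1 \<le> pen_obj c0 c1 y0 y1 b0' b1')"

text \<open>A minimizer selected with indifference broken in favour of inclusion (b1 \<noteq> 0):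
  an excluding minimizer is only selected if no including minimizer exists.\<close>
definition selected_est :: "real \<Rightarrow> real \<Rightarrow> real \<Rightarrow> real \<Rightarrow> real \<Rightarrow> real \<Rightarrow> bool" where
  "selected_est c0 c1 y0 y1 b0 b1 \<longleftrightarrow>
     is_minimizer c0 c1 y0 y1 b0 b1 \<and>
     (b1 = 0 \<longrightarrow> \<not> (\<exists>b0' b1'. b1' \<noteq> 0 \<and> is_minimizer c0 c1 y0 y1 b0' b1'))"

definition estimator :: "real \<Rightarrow> real \<Rightarrow> real \<Rightarrow> real \<Rightarrow> real \<times> real" where
  "estimator c0 c1 y0 y1 = (THE b. selected_est c0 c1 y0 y1 (fst b) (snd b))"

definition fhat :: "real \<Rightarrow> real \<Rightarrow> real \<Rightarrow> real \<Rightarrow> real \<times> real \<Rightarrow> real \<Rightarrow> real" where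
  "fhat c0 c1 beta0 beta1 e r =
     (let b = estimator c0 c1 (beta0 + beta1 * 0 + fst e) (beta0 + beta1 * 1 + snd e)
      in fst b + snd b * r)"

end

theory Submission
  imports Defs
begin

definition hh :: "real \<Rightarrow> real \<Rightarrow> real \<Rightarrow> real" where
  "hh c1 d b = (d - b)^2 / 2 + c1 * \<bar>b\<bar>"

definition gg :: "real \<Rightarrow> real \<Rightarrow> real \<Rightarrow> real \<Rightarrow> real" where
  "gg c0 c1 d b = hh c1 d b + c0 * (if b \<noteq> 0 then 1 else 0)"

lemma pen_decomp:
  "pen_obj c0 c1 y0 y1 b0 b1 = 2 * (b0 - (y0 + y1 - b1)/2)^2 + gg c0 c1 (y1 - y0) b1"
  unfolding pen_obj_def gg_def hh_def by (simp add: power2_eq_square field_simps)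

lemma minimizer_iff:
  "is_minimizer c0 c1 y0 y1 b0 b1 \<longleftrightarrow>
     b0 = (y0 + y1 - b1)/2 \<and> (\<forall>b. gg c0 c1 (y1 - y0) b1 \<le> gg c0 c1 (y1 - y0) b)"
proof
  assume m: "is_minimizer c0 c1 y0 y1 b0 b1"
  have "pen_obj c0 c1 y0 y1 b0 b1 \<le> pen_obj c0 c1 y0 y1 ((y0 + y1 - b1)/2) b1"
    using m unfolding is_minimizer_def by blast
  hence "(b0 - (y0 + y1 - b1)/2)^2 \<le> 0" by (simp add: pen_decomp)
  hence e: "b0 = (y0 + y1 - b1)/2" by simp
  moreover have "gg c0 c1 (y1 - y0) b1 \<le> gg c0 c1 (y1 - y0) b" for b
  proof -
    have "pen_obj c0 c1 y0 y1 b0 b1 \<le> pen_obj c0 c1 y0 y1 ((y0 + y1 - b)/2) b"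
      using m unfolding is_minimizer_def by blast
    thus ?thesis using e by (simp add: pen_decomp)
  qed
  ultimately show "b0 = (y0 + y1 - b1)/2 \<and> (\<forall>b. gg c0 c1 (y1 - y0) b1 \<le> gg c0 c1 (y1 - y0) b)"
    by blast
next
  assume "b0 = (y0 + y1 - b1)/2 \<and> (\<forall>b. gg c0 c1 (y1 - y0) b1 \<le> gg c0 c1 (y1 - y0) b)"
  thus "is_minimizer c0 c1 y0 y1 b0 b1"
    unfolding is_minimizer_def pen_decomp
  proof (intro allI)
    fix b0' b1'
    assume h: "b0 = (y0 + y1 - b1)/2 \<and> (\<forall>b. gg c0 c1 (y1 - y0) b1 \<le> gg c0 c1 (y1 - y0) b)"
    have "gg c0 c1 (y1 - y0) b1 \<le> gg c0 c1 (y1 - y0) b1'" using h by blast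
    moreover have "0 \<le> 2 * (b0' - (y0 + y1 - b1')/2)^2" by simp
    ultimately show "2 * (b0 - (y0 + y1 - b1)/2)^2 + gg c0 c1 (y1 - y0) b1
        \<le> 2 * (b0' - (y0 + y1 - b1')/2)^2 + gg c0 c1 (y1 - y0) b1'"
    proof -
      have "b0 - (y0 + y1 - b1)/2 = 0" using h by simp
      hence "2 * (b0 - (y0 + y1 - b1)/2)^2 = 0" by simp
      thus ?thesis using \<open>gg c0 c1 (y1 - y0) b1 \<le> gg c0 c1 (y1 - y0) b1'\<close>
        \<open>0 \<le> 2 * (b0' - (y0 + y1 - b1')/2)^2\<close> by linarith
    qed
  qed
qed

lemma hh_strict:
  assumes "b \<noteq> b'" and "c1 \<ge> 0"
  shows "hh c1 d ((b + b')/2) < (hh c1 d b + hh c1 d b')/2"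
proof -
  have e: "((b + b')/2 - d)^2 + (b - b')^2/4 = ((b - d)^2 + (b' - d)^2)/2"
    by (simp add: power2_eq_square field_simps)
  have p: "(b - b')^2 > 0" using assms by simp
  have "\<bar>(b + b')/2\<bar> \<le> (\<bar>b\<bar> + \<bar>b'\<bar>)/2" by simp
  hence a: "c1 * \<bar>(b + b')/2\<bar> \<le> c1 * ((\<bar>b\<bar> + \<bar>b'\<bar>)/2)"
    using assms(2) by (rule mult_left_mono)
  have "hh c1 d ((b + b')/2) = ((b + b')/2 - d)^2/2 + c1 * \<bar>(b + b')/2\<bar>"
    unfolding hh_def by (simp add: power2_commute)
  moreover have "(hh c1 d b + hh c1 d b')/2 = ((b - d)^2 + (b' - d)^2)/4 + c1 * ((\<bar>b\<bar> + \<bar>b'\<bar>)/2)"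
    unfolding hh_def by (simp add: power2_commute field_simps)
  ultimately show ?thesis using e p a by linarith
qed

lemma selected_unique:
  assumes c: "c0 \<ge> 0" "c1 \<ge> 0"
    and s1: "selected_est c0 c1 y0 y1 a0 a1" and s2: "selected_est c0 c1 y0 y1 b0 b1"
  shows "a0 = b0 \<and> a1 = b1"
proof -
  let ?d = "y1 - y0"
  have m1: "a0 = (y0 + y1 - a1)/2" "\<forall>b. gg c0 c1 ?d a1 \<le> gg c0 c1 ?d b"
    using s1 unfolding selected_est_def minimizer_iff by auto
  have m2: "b0 = (y0 + y1 - b1)/2" "\<forall>b. gg c0 c1 ?d b1 \<le> gg c0 c1 ?d b"
    using s2 unfolding selected_est_def minimizer_iff by auto
  have "a1 = b1"
  proof (rule ccontr)
    assume ne: "a1 \<noteq> b1"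
    show False
    proof (cases "a1 = 0")
      case True
      then show ?thesis using s1 s2 ne unfolding selected_est_def by auto
    next
      case a: False
      show ?thesis
      proof (cases "b1 = 0")
        case True
        then show ?thesis using s1 s2 a unfolding selected_est_def by auto
      next
        case b: False
        have eq: "hh c1 ?d a1 = hh c1 ?d b1"
        proof -
          have "gg c0 c1 ?d a1 \<le> gg c0 c1 ?d b1" "gg c0 c1 ?d b1 \<le> gg c0 c1 ?d a1"
            using m1(2) m2(2) by blast+
          thus ?thesis using a b unfolding gg_def by simp
        qed
        have st: "hh c1 ?d ((a1 + b1)/2) < hh c1 ?d a1"
          using hh_strict[OF ne c(2), of ?d] eq by simp
        have "gg c0 c1 ?d ((a1 + b1)/2) \<le> hh c1 ?d ((a1 + b1)/2) + c0"
          unfolding gg_def using c by simp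
        also have "\<dots> < gg c0 c1 ?d a1" using st a unfolding gg_def by simp
        finally show ?thesis using m1(2)[rule_format, of "(a1 + b1)/2"] by linarith
      qed
    qed
  qed
  thus ?thesis using m1 m2 by simp
qed

lemma soft_min:
  assumes c: "c1 \<ge> 0"
  shows "hh c1 d (if d > c1 then d - c1 else if d < - c1 then d + c1 else 0) \<le> hh c1 d b"
proof -
  have q: "0 \<le> (b - d + c1)^2" "0 \<le> (b - d - c1)^2" by simp_all
  have a1: "c1 * b \<le> c1 * \<bar>b\<bar>" using mult_left_mono[OF abs_ge_self c] by simp
  have "c1 * (-b) \<le> c1 * \<bar>b\<bar>" using mult_left_mono[OF abs_ge_minus_self c] by simp
  hence a2: "- c1 * b \<le> c1 * \<bar>b\<bar>" by simp
  consider "d > c1" | "d < - c1" | "\<bar>d\<bar> \<le> c1" by linarith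
  then show ?thesis
  proof cases
    case 1
    have "(b - d + c1)^2 = (d - b)^2 + 2 * c1 * b - 2*c1*d + c1^2"
      by (simp add: power2_eq_square algebra_simps)
    moreover have "(d - (d - c1))^2 = c1^2" by simp
    moreover have "c1 * (d - c1) = c1 * d - c1^2" by (simp add: power2_eq_square algebra_simps)
    moreover have "\<bar>d - c1\<bar> = d - c1" using 1 by simp
    ultimately show ?thesis using 1 q a1 a2 c unfolding hh_def by simp
  next
    case 2
    have "(b - d - c1)^2 = (d - b)^2 - 2 * c1 * b + 2*c1*d + c1^2"
      by (simp add: power2_eq_square algebra_simps)
    moreover have "(d - (d + c1))^2 = c1^2" by simp
    moreover have "c1 * \<bar>d + c1\<bar> = - c1 * d - c1^2" using 2 by (simp add: power2_eq_square algebra_simps)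
    ultimately show ?thesis using 2 q a1 a2 c unfolding hh_def by simp
  next
    case 3
    have "(d - b)^2 = d^2 - 2*(d*b) + b^2" by (simp add: power2_eq_square algebra_simps)
    moreover have "d * b \<le> c1 * \<bar>b\<bar>"
    proof -
      have "d * b \<le> \<bar>d\<bar> * \<bar>b\<bar>" by (metis abs_ge_self abs_mult)
      also have "\<dots> \<le> c1 * \<bar>b\<bar>" using 3 by (simp add: mult_right_mono)
      finally show ?thesis .
    qed
    moreover have "0 \<le> b^2" by simp
    moreover have "\<not> d > c1" "\<not> d < - c1" using 3 by auto
    moreover have "hh c1 d b - hh c1 d 0 = b^2/2 - d*b + c1*\<bar>b\<bar>"
      unfolding hh_def by (simp add: power2_eq_square field_simps)
    ultimately have "hh c1 d 0 \<le> hh c1 d b" by linarith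
    thus ?thesis using \<open>\<not> d > c1\<close> \<open>\<not> d < - c1\<close> by simp
  qed
qed

lemma exists_selected:
  assumes c: "c0 \<ge> 0" "c1 \<ge> 0"
  shows "\<exists>b0 b1. selected_est c0 c1 y0 y1 b0 b1"
proof -
  define d where "d = y1 - y0"
  define t where "t = (if d > c1 then d - c1 else if d < - c1 then d + c1 else 0)"
  have sm: "\<And>b. hh c1 d t \<le> hh c1 d b" unfolding t_def using soft_min[OF c(2)] by blast
  show ?thesis
  proof (cases "t \<noteq> 0 \<and> c0 + hh c1 d t \<le> hh c1 d 0")
    case True
    have "\<forall>b. gg c0 c1 d t \<le> gg c0 c1 d b"
    proof
      fix b show "gg c0 c1 d t \<le> gg c0 c1 d b"
        using True sm[of b] c unfolding gg_def by auto
    qed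
    hence "selected_est c0 c1 y0 y1 ((y0 + y1 - t)/2) t"
      unfolding selected_est_def minimizer_iff d_def using True by auto
    thus ?thesis by blast
  next
    case False
    have mn: "\<forall>b. gg c0 c1 d 0 \<le> gg c0 c1 d b"
    proof
      fix b show "gg c0 c1 d 0 \<le> gg c0 c1 d b"
      proof (cases "t = 0")
        case True
        then show ?thesis using sm[of b] c unfolding gg_def by auto
      next
        case f: False
        then show ?thesis using False sm[of b] c unfolding gg_def by auto
      qed
    qed
    have ni: "\<not> (\<exists>b0' b1'. b1' \<noteq> 0 \<and> is_minimizer c0 c1 y0 y1 b0' b1')"
    proof
      assume "\<exists>b0' b1'. b1' \<noteq> 0 \<and> is_minimizer c0 c1 y0 y1 b0' b1'"
      then obtain b0' b where b: "b \<noteq> 0" "is_minimizer c0 c1 y0 y1 b0' b" by blast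
      hence le: "gg c0 c1 d b \<le> gg c0 c1 d 0" unfolding minimizer_iff d_def by blast
      show False
      proof (cases "t = 0")
        case True
        have "hh c1 d (b/2) < (hh c1 d b + hh c1 d 0)/2" using hh_strict[of b 0 c1 d] b c by simp
        moreover have "hh c1 d 0 \<le> hh c1 d (b/2)" using sm True by metis
        ultimately show False using le b c unfolding gg_def by auto
      next
        case f: False
        then show False using False le b sm[of b] unfolding gg_def by auto
      qed
    qed
    have "selected_est c0 c1 y0 y1 ((y0 + y1 - 0)/2) 0"
      unfolding selected_est_def using ni mn minimizer_iff d_def by auto
    thus ?thesis by blast
  qed
qed

lemma selected_sign:
  assumes "selected_est c0 c1 y0 y1 b0 b1"
  shows "(y1 - y0) * b1 \<ge> 0 \<and> b0 = (y0 + y1 - b1)/2"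
proof -
  have m: "b0 = (y0 + y1 - b1)/2" "\<forall>b. gg c0 c1 (y1 - y0) b1 \<le> gg c0 c1 (y1 - y0) b"
    using assms unfolding selected_est_def minimizer_iff by auto
  have "gg c0 c1 (y1 - y0) b1 - gg c0 c1 (y1 - y0) (-b1) = - 2 * (y1 - y0) * b1"
    unfolding gg_def hh_def by (simp add: power2_eq_square field_simps)
  thus ?thesis using m(1) m(2)[rule_format, of "-b1"] by linarith
qed

lemma estimator_prop:
  assumes c: "c0 \<ge> 0" "c1 \<ge> 0"
  shows "(y1 - y0) * snd (estimator c0 c1 y0 y1) \<ge> 0 \<and>
         fst (estimator c0 c1 y0 y1) = (y0 + y1 - snd (estimator c0 c1 y0 y1))/2"
proof -
  have "\<exists>!b. selected_est c0 c1 y0 y1 (fst b) (snd b)"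
  proof -
    obtain b0 b1 where s: "selected_est c0 c1 y0 y1 b0 b1" using exists_selected[OF c] by blast
    show ?thesis
    proof (rule ex1I[of _ "(b0, b1)"])
      show "selected_est c0 c1 y0 y1 (fst (b0, b1)) (snd (b0, b1))" using s by simp
    next
      fix b assume "selected_est c0 c1 y0 y1 (fst b) (snd b)"
      then show "b = (b0, b1)" using selected_unique[OF c _ s] by (metis prod.collapse)
    qed
  qed
  hence "selected_est c0 c1 y0 y1 (fst (estimator c0 c1 y0 y1)) (snd (estimator c0 c1 y0 y1))"
    unfolding estimator_def by (rule theI')
  thus ?thesis by (rule selected_sign)
qed

theorem claim1:
  fixes c0 c1 beta0 beta1 x r :: real
    and eps :: "(real \<times> real) pmf"
  assumes "c0 \<ge> 0" and "c1 \<ge> 0"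
    and "measure_pmf.prob eps {(0, 0)} = 1"
    and "x \<in> {0, 1}" and "r \<in> {0, 1}"
  shows "measure_pmf.expectation eps (\<lambda>e. (fhat c0 c1 beta0 beta1 e x - (beta0 + beta1 * x))^2)
         \<le> measure_pmf.expectation eps (\<lambda>e. (fhat c0 c1 beta0 beta1 e r - (beta0 + beta1 * x))^2)"
proof -
  have "AE e in measure_pmf eps. e \<in> {(0,0)}"
    using assms(3) by (simp add: measure_pmf.prob_eq_1)
  hence "set_pmf eps \<subseteq> {(0,0)}" by (auto simp: AE_measure_pmf_iff)
  hence ep: "eps = return_pmf (0,0)" by (simp add: set_pmf_subset_singleton)
  define b where "b = estimator c0 c1 beta0 (beta0 + beta1)"
  have P: "beta1 * snd b \<ge> 0" "fst b = (2*beta0 + beta1 - snd b)/2"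
    using estimator_prop[OF assms(1,2), of "beta0 + beta1" beta0] unfolding b_def by auto
  have fh: "fhat c0 c1 beta0 beta1 (0,0) y = fst b + snd b * y" for y
    unfolding fhat_def b_def by (simp add: Let_def)
  have "(fst b + snd b * x - (beta0 + beta1 * x))^2 \<le> (fst b + snd b * r - (beta0 + beta1 * x))^2"
  proof -
    have fb: "fst b = beta0 + (beta1 - snd b)/2" using P(2) by (simp add: field_simps)
    show ?thesis using assms(4,5) P(1) unfolding fb
      by (auto simp: power2_eq_square algebra_simps)
  qed
  thus ?thesis unfolding ep using fh by simp
qed

end
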